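(* Let $\mathbf p=(p(n))_{n\ge 0}$ be a critical reproduction law, and suppose that its tail satisfies $\bar F(n)=n^{-\alpha}\ell(n)$ for all $n\ge1$, where $\ell$ is slowly varying and $\alpha>2$. Let $\varphi:(0,1)\to\mathbb{R}_+$ be an asymptotic inverse of $\bar F$, i.e. $\bar F(\varphi(\varepsilon))\sim\varepsilon$ as $\varepsilon\to0+$. Let $\sigma^2\in(0,\infty)$ be the variance of $\mathbf p$. Then for every $x>0$, $$\lim_{k\to\infty}\mathbb{P}\big(X^{\ast}_k< x\,\varphi(k^{-2})\big)=\exp\Big(-\frac{\sqrt2}{\sigma}\,x^{-\alpha/2}\Big).$$
   Context: $\mathbf p=(p(n))_{n\in\mathbb{N}}$ is a probability measure on the nonnegative integers, viewed as the law of the number of children of an individual; it is critical, meaning $\sum_{n\ge0}np(n)=1$, and $\mathbf p\neq\delta_1$. Its tail distribution function is $\bar F(n)=\sum_{i=n+1}^\infty p(i)$, and its variance is $\sigma^2=\sum_{n\ge0}n^2p(n)-1$. Consider a Galton–Watson process with reproduction law $\mathbf p$ started from $k\ge1$ ancestors; $T_k$ denotes the total population size (total number of individuals ever born, ancestors included), and for $i=1,\dots,T_k$, $X_i$ denotes the number of children of the $i$-th individual, individuals being enumerated by some arbitrary procedure (e.g. breadth-first search). The maximal offspring is $X^\ast_k=\max\{X_i:1\le i\le T_k\}$. Under the regular variation hypothesis such an asymptotic inverse $\varphi$ exists (it varies regularly at $0+$ with index $-1/\alpha$ and may be chosen nonincreasing). *)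

theory Defs
  imports "HOL-Probability.Probability"
begin

definition critical_law :: "nat pmf \<Rightarrow> bool" where
  "critical_law p \<longleftrightarrow> summable (\<lambda>n. real n * pmf p n)
      \<and> (\<Sum>n. real n * pmf p n) = 1 \<and> p \<noteq> return_pmf 1"

definition tail_fun :: "nat pmf \<Rightarrow> real \<Rightarrow> real" where
  "tail_fun p x = measure_pmf.prob p {i. real i > x}"

definition slowly_varying :: "(real \<Rightarrow> real) \<Rightarrow> bool" where
  "slowly_varying l \<longleftrightarrow> l \<in> borel_measurable borel
     \<and> (\<forall>\<^sub>F x in at_top. l x > 0)
     \<and> (\<forall>c>0. ((\<lambda>x. l (c * x) / l x) \<longlongrightarrow> 1) at_top)"

text \<open>Lukasiewicz coding of a Galton--Watson forest with k roots: the list xs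
  of offspring numbers in breadth-first order is the offspring sequence of a
  (finite) forest with k trees iff the partial sums
  k + sum_{i<m} (xs!i - 1) are positive for m < length xs and zero for
  m = length xs.  The total population size T_k is length xs.\<close>
definition luk_path :: "nat \<Rightarrow> nat list \<Rightarrow> nat \<Rightarrow> int" where
  "luk_path k xs m = int k + (\<Sum>i<m. int (xs ! i) - 1)"

definition lukasiewicz :: "nat \<Rightarrow> nat list \<Rightarrow> bool" where
  "lukasiewicz k xs \<longleftrightarrow> xs \<noteq> []
     \<and> (\<forall>m<length xs. luk_path k xs m > 0)
     \<and> luk_path k xs (length xs) = 0"

text \<open>P(X*_k < y) for the Galton--Watson process with law p started from k
  ancestors: the forest has offspring sequence xs (BFS order) with probability
  prod_i p(xs!i); X*_k is the maximum of the entries of xs.  (The event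
  {T_k < infinity} is included; it has probability 1 for critical laws.)\<close>
definition GW_max_lt_prob :: "nat pmf \<Rightarrow> nat \<Rightarrow> real \<Rightarrow> real" where
  "GW_max_lt_prob p k y =
     infsum (\<lambda>xs. prod_list (map (pmf p) xs))
       {xs. lukasiewicz k xs \<and> Max (set xs) < y}"

end

theory Submission
  imports Defs "HOL-Real_Asymp.Real_Asymp"
begin

lemma luk_path_0[simp]: "luk_path k xs 0 = int k"
  by (simp add: luk_path_def)

lemma luk_path_Cons:
  assumes "k + n \<ge> 1"
  shows "luk_path k (n # rs) (Suc m) = luk_path (k + n - 1) rs m"
proof -
  have "luk_path k (n # rs) (Suc m) = int k + ((int n - 1) + (\<Sum>i<m. int (rs ! i) - 1))"
    unfolding luk_path_def by (subst sum.lessThan_Suc_shift) simp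
  also have "\<dots> = luk_path (k + n - 1) rs m"
    using assms unfolding luk_path_def by (simp add: of_nat_diff)
  finally show ?thesis .
qed

lemma luk_Nil[simp]: "\<not> lukasiewicz k []"
  by (simp add: lukasiewicz_def)

lemma luk_Cons:
  "lukasiewicz k (n # rs) \<longleftrightarrow> k \<ge> 1 \<and> ((k + n = 1 \<and> rs = []) \<or> (k + n > 1 \<and> lukasiewicz (k + n - 1) rs))"
proof (cases "k \<ge> 1")
  case False
  then show ?thesis unfolding lukasiewicz_def by (auto intro!: exI[of _ 0])
next
  case True
  have A: "(\<forall>m<length (n # rs). luk_path k (n # rs) m > 0) \<longleftrightarrow>
          (\<forall>m<length rs. luk_path (k + n - 1) rs m > 0)"
  proof
    assume H: "\<forall>m<length (n # rs). luk_path k (n # rs) m > 0"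
    show "\<forall>m<length rs. luk_path (k + n - 1) rs m > 0"
    proof (intro allI impI)
      fix m assume "m < length rs"
      then have "luk_path k (n # rs) (Suc m) > 0" using H by simp
      then show "luk_path (k + n - 1) rs m > 0" using luk_path_Cons True by simp
    qed
  next
    assume H: "\<forall>m<length rs. luk_path (k + n - 1) rs m > 0"
    show "\<forall>m<length (n # rs). luk_path k (n # rs) m > 0"
    proof (intro allI impI)
      fix m assume m: "m < length (n # rs)"
      show "luk_path k (n # rs) m > 0"
      proof (cases m)
        case 0 then show ?thesis using True by simp
      next
        case (Suc m') then show ?thesis using H m luk_path_Cons[of k n rs m'] True by simp
      qed
    qed
  qed
  have B: "luk_path k (n # rs) (length (n # rs)) = luk_path (k + n - 1) rs (length rs)"
    using luk_path_Cons True by simp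
  show ?thesis
  proof (cases "k + n = 1")
    case True1: True
    have "lukasiewicz k (n # rs) \<longleftrightarrow> rs = []"
    proof
      assume L: "lukasiewicz k (n # rs)"
      show "rs = []"
      proof (rule ccontr)
        assume "rs \<noteq> []"
        then have "luk_path (k + n - 1) rs 0 > 0" using L A unfolding lukasiewicz_def by auto
        then show False using True1 by simp
      qed
    next
      assume "rs = []"
      then show "lukasiewicz k (n # rs)" using True True1 B unfolding lukasiewicz_def
        by (auto simp: luk_path_def)
    qed
    then show ?thesis using True True1 by simp
  next
    case False
    then have "k + n > 1" using True by simp
    then show ?thesis using True A B False unfolding lukasiewicz_def by auto
  qed
qed

lemma luk_append:
  assumes "a \<ge> 1" "b \<ge> 1"
  shows "lukasiewicz (a + b) xs \<longleftrightarrow> (\<exists>ys zs. xs = ys @ zs \<and> lukasiewicz a ys \<and> lukasiewicz b zs)"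
  using assms(1)
proof (induction xs arbitrary: a)
  case Nil
  then show ?case by simp
next
  case (Cons n rs)
  show ?case
  proof (cases "a + n = 1")
    case True
    then have an: "a = 1" "n = 0" using Cons.prems by auto
    have "lukasiewicz (a + b) (n # rs) \<longleftrightarrow> lukasiewicz b rs"
      using an assms(2) by (simp add: luk_Cons)
    also have "\<dots> \<longleftrightarrow> (\<exists>ys zs. n # rs = ys @ zs \<and> lukasiewicz a ys \<and> lukasiewicz b zs)"
    proof
      assume "lukasiewicz b rs"
      then show "\<exists>ys zs. n # rs = ys @ zs \<and> lukasiewicz a ys \<and> lukasiewicz b zs"
        using an by (intro exI[of _ "[0]"] exI[of _ rs]) (simp add: luk_Cons)
    next
      assume "\<exists>ys zs. n # rs = ys @ zs \<and> lukasiewicz a ys \<and> lukasiewicz b zs"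
      then obtain ys zs where H: "n # rs = ys @ zs" "lukasiewicz a ys" "lukasiewicz b zs" by blast
      then obtain ys' where "ys = n # ys'" "rs = ys' @ zs"
        by (cases ys) auto
      then show "lukasiewicz b rs" using H an by (simp add: luk_Cons)
    qed
    finally show ?thesis .
  next
    case False
    then have an: "a + n > 1" using Cons.prems by auto
    have "lukasiewicz (a + b) (n # rs) \<longleftrightarrow> lukasiewicz ((a + n - 1) + b) rs"
      using an assms(2) by (simp add: luk_Cons algebra_simps)
    also have "\<dots> \<longleftrightarrow> (\<exists>ys zs. rs = ys @ zs \<and> lukasiewicz (a + n - 1) ys \<and> lukasiewicz b zs)"
      using Cons.IH[of "a + n - 1"] an by simp
    also have "\<dots> \<longleftrightarrow> (\<exists>ys zs. n # rs = ys @ zs \<and> lukasiewicz a ys \<and> lukasiewicz b zs)"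
    proof
      assume "\<exists>ys zs. rs = ys @ zs \<and> lukasiewicz (a + n - 1) ys \<and> lukasiewicz b zs"
      then obtain ys zs where "rs = ys @ zs" "lukasiewicz (a + n - 1) ys" "lukasiewicz b zs" by blast
      then show "\<exists>ys zs. n # rs = ys @ zs \<and> lukasiewicz a ys \<and> lukasiewicz b zs"
        using an Cons.prems by (intro exI[of _ "n # ys"] exI[of _ zs]) (simp add: luk_Cons)
    next
      assume "\<exists>ys zs. n # rs = ys @ zs \<and> lukasiewicz a ys \<and> lukasiewicz b zs"
      then obtain ys zs where H: "n # rs = ys @ zs" "lukasiewicz a ys" "lukasiewicz b zs" by blast
      then obtain ys' where "ys = n # ys'" "rs = ys' @ zs"
        by (cases ys) auto
      then show "\<exists>ys zs. rs = ys @ zs \<and> lukasiewicz (a + n - 1) ys \<and> lukasiewicz b zs"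
        using H an by (auto simp: luk_Cons)
    qed
    finally show ?thesis .
  qed
qed

lemma luk_append_unique:
  assumes "lukasiewicz a ys" "lukasiewicz a ys'" "ys @ zs = ys' @ zs'"
  shows "ys = ys' \<and> zs = zs'"
  using assms
proof (induction ys arbitrary: a ys')
  case Nil
  then show ?case by simp
next
  case (Cons n r)
  from Cons.prems obtain r' where ys': "ys' = n # r'" "r @ zs = r' @ zs'"
    by (cases ys') auto
  show ?case
  proof (cases "a + n = 1")
    case True
    then show ?thesis using Cons.prems ys' by (auto simp: luk_Cons)
  next
    case False
    then have "lukasiewicz (a + n - 1) r" "lukasiewicz (a + n - 1) r'"
      using Cons.prems ys' by (auto simp: luk_Cons)
    then show ?thesis using Cons.IH ys' by blast
  qed
qed

definition W :: "nat pmf \<Rightarrow> nat list \<Rightarrow> real" where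
  "W p xs = prod_list (map (pmf p) xs)"

lemma W_nonneg: "W p xs \<ge> 0"
  unfolding W_def by (induction xs) auto

lemma W_Cons[simp]: "W p (n # xs) = pmf p n * W p xs"
  by (simp add: W_def)

lemma W_Nil[simp]: "W p [] = 1"
  by (simp add: W_def)

lemma W_append: "W p (xs @ ys) = W p xs * W p ys"
  by (simp add: W_def)

definition Cset :: "nat \<Rightarrow> nat \<Rightarrow> nat \<Rightarrow> nat list set" where
  "Cset N M k = {xs. lukasiewicz k xs \<and> length xs \<le> N \<and> set xs \<subseteq> {..M}}"

lemma finite_Cset: "finite (Cset N M k)"
proof -
  have "Cset N M k \<subseteq> {xs. set xs \<subseteq> {..M} \<and> length xs \<le> N}"
    unfolding Cset_def by auto
  then show ?thesis using finite_lists_length_le[of "{..M}" N] finite_subset by blast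
qed

lemma sum_pmf_le1: "finite S \<Longrightarrow> sum (pmf p) S \<le> 1"
  by (metis measure_measure_pmf_finite measure_pmf.subprob_measure_le_1)

lemma Cset_bound: "k \<ge> 1 \<Longrightarrow> sum (W p) (Cset N M k) \<le> 1"
proof (induction N arbitrary: k)
  case 0
  then have "Cset 0 M k = {}" unfolding Cset_def by auto
  then show ?case by simp
next
  case (Suc N)
  define D where "D n = (if k + n = 1 then {[]} else Cset N M (k + n - 1))" for n
  have eq: "Cset (Suc N) M k = (\<lambda>(n, rs). n # rs) ` Sigma {..M} D"
  proof (intro equalityI subsetI)
    fix xs assume xs: "xs \<in> Cset (Suc N) M k"
    then obtain n rs where xs': "xs = n # rs" unfolding Cset_def by (cases xs) auto
    then have "(n, rs) \<in> Sigma {..M} D" using xs Suc.prems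
      unfolding Cset_def D_def by (auto simp: luk_Cons)
    then show "xs \<in> (\<lambda>(n, rs). n # rs) ` Sigma {..M} D" using xs' by force
  next
    fix xs assume "xs \<in> (\<lambda>(n, rs). n # rs) ` Sigma {..M} D"
    then obtain n rs where "xs = n # rs" "n \<le> M" "rs \<in> D n" by auto
    then show "xs \<in> Cset (Suc N) M k" using Suc.prems
      unfolding Cset_def D_def by (auto simp: luk_Cons split: if_splits)
  qed
  have inj: "inj_on (\<lambda>(n, rs). n # rs) (Sigma {..M} D)"
    by (auto simp: inj_on_def)
  have finD: "finite (D n)" for n unfolding D_def using finite_Cset by auto
  have Dle: "sum (W p) (D n) \<le> 1" for n
    unfolding D_def using Suc.IH Suc.prems by auto
  have "sum (W p) (Cset (Suc N) M k) = (\<Sum>(n, rs)\<in>Sigma {..M} D. pmf p n * W p rs)"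
    unfolding eq by (subst sum.reindex[OF inj]) (simp add: case_prod_unfold)
  also have "\<dots> = (\<Sum>n\<le>M. pmf p n * sum (W p) (D n))"
    by (subst sum.Sigma[symmetric]) (auto simp: finD sum_distrib_left)
  also have "\<dots> \<le> (\<Sum>n\<le>M. pmf p n)"
    by (intro sum_mono) (use Dle in \<open>auto intro: mult_left_le simp: pmf_nonneg\<close>)
  also have "\<dots> \<le> 1" by (rule sum_pmf_le1) simp
  finally show ?case .
qed

lemma finite_luk_bound:
  assumes "k \<ge> 1" "finite F" "F \<subseteq> {xs. lukasiewicz k xs}"
  shows "sum (W p) F \<le> 1"
proof -
  define N where "N = Max (length ` F)"
  define M where "M = Max (\<Union>xs\<in>F. set xs)"
  have "F \<subseteq> Cset N M k"
    using assms unfolding Cset_def N_def M_def by (auto intro!: Max_ge)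
  then have "sum (W p) F \<le> sum (W p) (Cset N M k)"
    by (intro sum_mono2 finite_Cset) (auto simp: W_nonneg)
  also have "\<dots> \<le> 1" using Cset_bound assms by blast
  finally show ?thesis .
qed

lemma luk_summable:
  assumes "k \<ge> 1" "A \<subseteq> {xs. lukasiewicz k xs}"
  shows "W p summable_on A" "infsum (W p) A \<le> 1" "infsum (W p) A \<ge> 0"
proof -
  show S: "W p summable_on A"
    by (rule nonneg_bounded_partial_sums_imp_summable_on[where C=1])
       (use assms finite_luk_bound in \<open>auto simp: W_nonneg eventually_finite_subsets_at_top_weakI\<close>)
  show "infsum (W p) A \<le> 1"
    by (rule infsum_le_finite_sums[OF S]) (use assms finite_luk_bound in blast)
  show "infsum (W p) A \<ge> 0" by (simp add: W_nonneg infsum_nonneg)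
qed

definition Aset :: "real \<Rightarrow> nat \<Rightarrow> nat list set" where
  "Aset y k = {xs. lukasiewicz k xs \<and> (\<forall>a\<in>set xs. real a < y)}"

definition G :: "nat pmf \<Rightarrow> real \<Rightarrow> nat \<Rightarrow> real" where
  "G p y k = infsum (W p) (Aset y k)"

lemma Aset_summable: "k \<ge> 1 \<Longrightarrow> W p summable_on Aset y k"
  and G_le1: "k \<ge> 1 \<Longrightarrow> G p y k \<le> 1"
  and G_nonneg: "k \<ge> 1 \<Longrightarrow> G p y k \<ge> 0"
  using luk_summable[of k "Aset y k" p] unfolding G_def Aset_def by auto

lemma G_eq_GW: "GW_max_lt_prob p k y = G p y k"
proof -
  have "{xs. lukasiewicz k xs \<and> real (Max (set xs)) < y} = Aset y k"
    unfolding Aset_def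
  proof (intro Collect_cong conj_cong refl)
    fix xs assume "lukasiewicz k xs"
    then have "xs \<noteq> []" by (auto simp: lukasiewicz_def)
    then show "(real (Max (set xs)) < y) = (\<forall>a\<in>set xs. real a < y)"
      by (auto intro: le_less_trans[rotated] simp: Max_ge)
  qed
  then show ?thesis unfolding GW_max_lt_prob_def G_def W_def by simp
qed

lemma finite_below: "finite {n::nat. real n < y}"
  by (rule finite_subset[of _ "{..nat \<lceil>y\<rceil>}"]) (auto, linarith)

lemma G_first:
  "G p y 1 = (\<Sum>n\<in>{n. real n < y}. pmf p n * (if n = 0 then 1 else G p y n))"
proof -
  define I where "I = {n::nat. real n < y}"
  define D where "D n = (if n = 0 then {[]} else Aset y n)" for n
  have eq: "Aset y 1 = (\<lambda>(n, rs). n # rs) ` Sigma I D"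
  proof (intro equalityI subsetI)
    fix xs assume xs: "xs \<in> Aset y 1"
    then obtain n rs where xs': "xs = n # rs" unfolding Aset_def by (cases xs) auto
    then have "(n, rs) \<in> Sigma I D" using xs
      unfolding Aset_def D_def I_def by (auto simp: luk_Cons)
    then show "xs \<in> (\<lambda>(n, rs). n # rs) ` Sigma I D" using xs' by force
  next
    fix xs assume "xs \<in> (\<lambda>(n, rs). n # rs) ` Sigma I D"
    then obtain n rs where "xs = n # rs" "n \<in> I" "rs \<in> D n" by auto
    then show "xs \<in> Aset y 1"
      unfolding Aset_def D_def I_def by (auto simp: luk_Cons split: if_splits)
  qed
  have inj: "inj_on (\<lambda>(n, rs). n # rs) (Sigma I D)"
    by (auto simp: inj_on_def)
  have hs: "((\<lambda>rs. W p rs) has_sum (if n = 0 then 1 else G p y n)) (D n)" for n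
  proof (cases "n = 0")
    case True then show ?thesis unfolding D_def using has_sum_finite[of "{[]}" "W p"] by simp
  next
    case False then show ?thesis unfolding D_def G_def
      using Aset_summable[of n p y] by (simp add: has_sum_infsum)
  qed
  have hs2: "((\<lambda>rs. pmf p n * W p rs) has_sum (pmf p n * (if n = 0 then 1 else G p y n))) (D n)" for n
    by (rule has_sum_cmult_right[OF hs])
  have finI: "finite I" unfolding I_def by (rule finite_below)
  have summ: "(\<lambda>(n, rs). pmf p n * W p rs) summable_on Sigma I D"
    by (rule summable_on_SigmaI[where g="\<lambda>n. pmf p n * (if n = 0 then 1 else G p y n)"])
       (use hs2 in \<open>auto simp: finI W_nonneg pmf_nonneg\<close>)
  have "G p y 1 = infsum (\<lambda>(n, rs). pmf p n * W p rs) (Sigma I D)"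
    unfolding G_def eq by (subst infsum_reindex[OF inj]) (simp add: comp_def case_prod_unfold)
  also have "\<dots> = infsum (\<lambda>n. infsum (\<lambda>rs. pmf p n * W p rs) (D n)) I"
    using infsum_Sigma'_banach[OF summ] by simp
  also have "\<dots> = infsum (\<lambda>n. pmf p n * (if n = 0 then 1 else G p y n)) I"
    by (intro infsum_cong) (use hs2 infsumI in blast)
  also have "\<dots> = (\<Sum>n\<in>I. pmf p n * (if n = 0 then 1 else G p y n))"
    using finI by simp
  finally show ?thesis unfolding I_def .
qed

lemma G_append:
  assumes "k \<ge> 1"
  shows "G p y (Suc k) = G p y 1 * G p y k"
proof -
  have eq: "Aset y (1 + k) = (\<lambda>(a, b). a @ b) ` Sigma (Aset y 1) (\<lambda>_. Aset y k)"
  proof (intro equalityI subsetI)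
    fix xs assume "xs \<in> Aset y (1 + k)"
    then obtain ys zs where "xs = ys @ zs" "lukasiewicz 1 ys" "lukasiewicz k zs"
        "\<forall>a\<in>set xs. real a < y"
      using luk_append[of 1 k xs] assms unfolding Aset_def by auto
    then show "xs \<in> (\<lambda>(a, b). a @ b) ` Sigma (Aset y 1) (\<lambda>_. Aset y k)"
      unfolding Aset_def by force
  next
    fix xs assume "xs \<in> (\<lambda>(a, b). a @ b) ` Sigma (Aset y 1) (\<lambda>_. Aset y k)"
    then obtain a b where ab: "xs = a @ b" "a \<in> Aset y 1" "b \<in> Aset y k" by auto
    then have "lukasiewicz (1 + k) xs"
      using luk_append[of 1 k xs] assms unfolding Aset_def by auto
    then show "xs \<in> Aset y (1 + k)"
      using ab unfolding Aset_def by auto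
  qed
  have inj: "inj_on (\<lambda>(a, b). a @ b) (Sigma (Aset y 1) (\<lambda>_. Aset y k))"
    unfolding inj_on_def Aset_def by (force dest: luk_append_unique)
  have hs: "((\<lambda>b. W p a * W p b) has_sum (W p a * G p y k)) (Aset y k)" for a
    unfolding G_def using Aset_summable[of k p y] assms
    by (intro has_sum_cmult_right) (simp add: has_sum_infsum)
  have summ: "(\<lambda>(a, b). W p a * W p b) summable_on Sigma (Aset y 1) (\<lambda>_. Aset y k)"
    by (rule summable_on_SigmaI[where g="\<lambda>a. W p a * G p y k"])
       (use hs Aset_summable[of 1 p y] in \<open>auto simp: W_nonneg intro!: summable_on_cmult_left\<close>)
  have "G p y (Suc k) = infsum (W p) (Aset y (1 + k))" by (simp add: G_def)
  also have "\<dots> = infsum (W p \<circ> (\<lambda>(a, b). a @ b)) (Sigma (Aset y 1) (\<lambda>_. Aset y k))"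
    unfolding eq by (rule infsum_reindex[OF inj])
  also have "\<dots> = infsum (\<lambda>(a, b). W p a * W p b) (Sigma (Aset y 1) (\<lambda>_. Aset y k))"
    by (intro infsum_cong) (auto simp: W_append)
  also have "\<dots> = infsum (\<lambda>a. infsum (\<lambda>b. W p a * W p b) (Aset y k)) (Aset y 1)"
    using infsum_Sigma'_banach[OF summ] by simp
  also have "\<dots> = infsum (\<lambda>a. W p a * G p y k) (Aset y 1)"
    by (intro infsum_cong) (use hs infsumI in blast)
  also have "\<dots> = G p y 1 * G p y k"
    unfolding G_def by (rule infsum_cmult_left) (simp add: Aset_summable)
  finally show ?thesis .
qed

lemma G_pow: "k \<ge> 1 \<Longrightarrow> G p y k = G p y 1 ^ k"
proof (induction k rule: dec_induct)
  case base then show ?case by simp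
next
  case (step k) then show ?case using G_append[of k p y] by simp
qed

lemma G_fix:
  "G p y 1 = (\<Sum>n\<in>{n. real n < y}. pmf p n * G p y 1 ^ n)"
proof -
  have "G p y 1 = (\<Sum>n\<in>{n. real n < y}. pmf p n * (if n = 0 then 1 else G p y n))"
    by (rule G_first)
  also have "\<dots> = (\<Sum>n\<in>{n. real n < y}. pmf p n * G p y 1 ^ n)"
  proof (intro sum.cong refl)
    fix n show "pmf p n * (if n = 0 then 1 else G p y n) = pmf p n * G p y 1 ^ n"
      using G_pow[of n p y] by (cases "n = 0") auto
  qed
  finally show ?thesis .
qed

lemma filterlim_div_floor:
  assumes t: "filterlim t at_top F" and N: "N \<ge> (1::nat)"
  shows "filterlim (\<lambda>k. nat \<lfloor>t k / real N\<rfloor>) sequentially F"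
proof -
  have "filterlim (\<lambda>k. (1 / real N) * t k) at_top F"
    by (rule filterlim_tendsto_pos_mult_at_top[OF tendsto_const]) (use N t in auto)
  then have "filterlim (\<lambda>k. t k / real N) at_top F" by simp
  then show ?thesis
    by (intro filterlim_compose[OF filterlim_nat_sequentially]
        filterlim_compose[OF filterlim_floor_sequentially])
qed

locale rvR =
  fixes R :: "nat \<Rightarrow> real" and \<alpha> :: real
  assumes anti: "\<And>m n. m \<le> n \<Longrightarrow> R n \<le> R m"
    and pos: "\<And>n. R n > 0"
    and alpha_pos: "\<alpha> > 0"
    and lim: "\<And>a b. 1 \<le> a \<Longrightarrow> 1 \<le> b \<Longrightarrow>
               ((\<lambda>n. R (a * n) / R (b * n)) \<longlongrightarrow> (real a / real b) powr (-\<alpha>)) sequentially"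
begin

lemma ratio_upper:
  assumes t: "filterlim t at_top F" and s: "((\<lambda>k. s k / t k) \<longlongrightarrow> x) F"
    and z: "0 < z" "z < x" and b: "b > z powr (-\<alpha>)"
  shows "eventually (\<lambda>k. R (nat \<lfloor>s k\<rfloor>) / R (nat \<lfloor>t k\<rfloor>) < b) F"
proof -
  define z' where "z' = (z + x) / 2"
  have z': "z < z'" "z' < x" using z by (auto simp: z'_def)
  define N where "N = nat \<lceil>(1 + z) / (z' - z)\<rceil> + 1"
  have N1: "N \<ge> 1" by (simp add: N_def)
  have "real N > (1 + z) / (z' - z)" unfolding N_def by linarith
  then have NN: "real N * (z' - z) > 1 + z" using z' by (simp add: field_simps)
  define a where "a = nat \<lfloor>z' * real N\<rfloor>"
  have a_ge: "real a \<ge> z' * real N - 1" unfolding a_def using z' z by linarith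
  have a_le: "real a \<le> z' * real N" unfolding a_def using z' z by (intro of_nat_floor) simp
  have az: "real a \<ge> z * (real N + 1)" using a_ge NN by (simp add: algebra_simps)
  have a1: "a \<ge> 1"
  proof -
    have "z * (real N + 1) > 0" using z by simp
    then show ?thesis using az by (cases a) auto
  qed
  have frac: "real a / (real N + 1) \<ge> z" using az by (simp add: field_simps)
  have "(real a / real (N + 1)) powr (-\<alpha>) \<le> z powr (-\<alpha>)"
    using frac z alpha_pos by (intro powr_mono2') (auto simp: add.commute)
  with b have Lb: "(real a / real (N + 1)) powr (-\<alpha>) < b" by simp
  have ev1: "eventually (\<lambda>n. R (a * n) / R ((N + 1) * n) < b) sequentially"
    using order_tendstoD(2)[OF lim[OF a1] Lb] by simp
  define j where "j k = nat \<lfloor>t k / real N\<rfloor>" for k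
  have jlim: "filterlim j sequentially F"
    unfolding j_def by (rule filterlim_div_floor[OF t N1])
  have ev2: "eventually (\<lambda>k. R (a * j k) / R ((N + 1) * j k) < b) F"
    using filterlim_iff[THEN iffD1, OF jlim, rule_format, OF ev1] by simp
  have ev3: "eventually (\<lambda>k. s k / t k > z') F"
    using order_tendstoD(1)[OF s z'(2)] .
  have ev4: "eventually (\<lambda>k. t k \<ge> real N * real N + 1) F"
    using t by (simp add: filterlim_at_top)
  show ?thesis
    using ev2 ev3 ev4
  proof eventually_elim
    case (elim k)
    have tpos: "t k > 0" using elim(3) by (smt (verit) mult_nonneg_nonneg of_nat_0_le_iff)
    have sge: "s k \<ge> z' * t k" using elim(2) tpos by (simp add: field_simps)
    have jle: "real N * real (j k) \<le> t k"
    proof -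
      have "real (j k) \<le> t k / real N" unfolding j_def using tpos N1 by (simp add: of_nat_floor)
      then show ?thesis using N1 by (simp add: field_simps)
    qed
    have jgt: "t k < real N * (real (j k) + 1)"
    proof -
      have "t k / real N < real (j k) + 1" unfolding j_def using tpos N1 by linarith
      then show ?thesis using N1 by (simp add: field_simps)
    qed
    have jN: "j k \<ge> N"
    proof -
      have "t k / real N \<ge> real N" using elim(3) N1 by (simp add: field_simps)
      then show ?thesis unfolding j_def by (simp add: le_nat_floor)
    qed
    have "real (a * j k) \<le> z' * real N * real (j k)" using a_le by (simp add: mult_right_mono)
    also have "\<dots> \<le> z' * t k" using jle z' z by (simp add: mult.assoc mult_left_mono)
    also have "\<dots> \<le> s k" by (rule sge)
    finally have "a * j k \<le> nat \<lfloor>s k\<rfloor>" by (simp add: le_nat_floor)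
    then have n1: "R (nat \<lfloor>s k\<rfloor>) \<le> R (a * j k)" by (rule anti)
    have "real N * (real (j k) + 1) \<le> real ((N + 1) * j k)" using jN by (simp add: algebra_simps)
    then have "nat \<lfloor>t k\<rfloor> \<le> (N + 1) * j k" using jgt by linarith
    then have n2: "R ((N + 1) * j k) \<le> R (nat \<lfloor>t k\<rfloor>)" by (rule anti)
    have "R (nat \<lfloor>s k\<rfloor>) / R (nat \<lfloor>t k\<rfloor>) \<le> R (a * j k) / R ((N + 1) * j k)"
      using n1 n2 pos by (intro frac_le) (auto intro: less_imp_le)
    then show ?case using elim(1) by simp
  qed
qed

lemma ratio_lower:
  assumes t: "filterlim t at_top F" and s: "((\<lambda>k. s k / t k) \<longlongrightarrow> x) F"
    and x: "0 < x" and w: "x < w" and b: "b < w powr (-\<alpha>)"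
  shows "eventually (\<lambda>k. R (nat \<lfloor>s k\<rfloor>) / R (nat \<lfloor>t k\<rfloor>) > b) F"
proof -
  define z1 where "z1 = x + (w - x) / 3"
  define z2 where "z2 = x + 2 * (w - x) / 3"
  have zz: "x < z1" "z1 < z2" "z2 < w" using w unfolding z1_def z2_def by (auto simp: field_simps)
  define N where "N = nat \<lceil>1 / (w - z2)\<rceil> + 1"
  have N1: "N \<ge> 1" by (simp add: N_def)
  have "real N > 1 / (w - z2)" unfolding N_def by linarith
  then have NN: "real N * (w - z2) > 1" using zz by (simp add: field_simps)
  define c where "c = nat \<lceil>z2 * real N\<rceil>"
  have c_ge: "real c \<ge> z2 * real N" unfolding c_def by linarith
  have c_le: "real c \<le> z2 * real N + 1"
  proof -
    have h: "z2 * real N \<ge> 0" using zz x by simp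
    then have "real c = real_of_int \<lceil>z2 * real N\<rceil>" unfolding c_def by simp
    then show ?thesis using ceiling_correct[of "z2 * real N"] by linarith
  qed
  have c1: "c \<ge> 1"
  proof -
    have "z2 * real N > 0" using zz x N1 by simp
    then show ?thesis using c_ge by (cases c) auto
  qed
  have frac: "real c / real N \<le> w" using c_le NN N1 by (simp add: field_simps)
  have fracpos: "real c / real N > 0" using c1 N1 by simp
  have "w powr (-\<alpha>) \<le> (real c / real N) powr (-\<alpha>)"
    using frac fracpos alpha_pos by (intro powr_mono2') auto
  with b have Lb: "b < (real c / real N) powr (-\<alpha>)" by simp
  have ev1: "eventually (\<lambda>n. R (c * n) / R (N * n) > b) sequentially"
    using order_tendstoD(1)[OF lim[OF c1 N1] Lb] by simp
  define j where "j k = nat \<lfloor>t k / real N\<rfloor>" for k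
  have jlim: "filterlim j sequentially F"
    unfolding j_def by (rule filterlim_div_floor[OF t N1])
  have ev2: "eventually (\<lambda>k. R (c * j k) / R (N * j k) > b) F"
    using filterlim_iff[THEN iffD1, OF jlim, rule_format, OF ev1] by simp
  define J where "J = nat \<lceil>z1 / (z2 - z1)\<rceil>"
  have ev2': "eventually (\<lambda>k. j k \<ge> J) F"
    using filterlim_iff[THEN iffD1, OF jlim, rule_format, OF eventually_ge_at_top[of J]] by simp
  have ev3: "eventually (\<lambda>k. s k / t k < z1) F"
    using order_tendstoD(2)[OF s zz(1)] .
  have ev4: "eventually (\<lambda>k. t k \<ge> 1) F"
    using t by (simp add: filterlim_at_top)
  show ?thesis
    using ev2 ev2' ev3 ev4
  proof eventually_elim
    case (elim k)
    have tpos: "t k > 0" using elim(4) by simp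
    have sle: "s k \<le> z1 * t k" using elim(3) tpos by (simp add: field_simps)
    have jle: "real N * real (j k) \<le> t k"
    proof -
      have "real (j k) \<le> t k / real N" unfolding j_def using tpos N1 by (simp add: of_nat_floor)
      then show ?thesis using N1 by (simp add: field_simps)
    qed
    have jgt: "t k < real N * (real (j k) + 1)"
    proof -
      have "t k / real N < real (j k) + 1" unfolding j_def using tpos N1 by linarith
      then show ?thesis using N1 by (simp add: field_simps)
    qed
    have jJ: "real (j k) \<ge> z1 / (z2 - z1)" using elim(2) unfolding J_def by linarith
    then have jJ': "z1 * (real (j k) + 1) \<le> z2 * real (j k)" using zz by (simp add: field_simps)
    have "s k \<le> z1 * t k" by (rule sle)
    also have "\<dots> \<le> z1 * (real N * (real (j k) + 1))" using jgt zz x by (intro mult_left_mono) auto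
    also have "\<dots> = real N * (z1 * (real (j k) + 1))" by simp
    also have "\<dots> \<le> real N * (z2 * real (j k))" using jJ' by (intro mult_left_mono) auto
    also have "\<dots> = (z2 * real N) * real (j k)" by (simp add: algebra_simps)
    also have "\<dots> \<le> real c * real (j k)" using c_ge by (intro mult_right_mono) auto
    finally have "s k \<le> real (c * j k)" by simp
    then have "nat \<lfloor>s k\<rfloor> \<le> c * j k" by linarith
    then have n1: "R (c * j k) \<le> R (nat \<lfloor>s k\<rfloor>)" by (rule anti)
    have "N * j k \<le> nat \<lfloor>t k\<rfloor>" using jle by (simp add: le_nat_floor)
    then have n2: "R (nat \<lfloor>t k\<rfloor>) \<le> R (N * j k)" by (rule anti)
    have "R (c * j k) / R (N * j k) \<le> R (nat \<lfloor>s k\<rfloor>) / R (nat \<lfloor>t k\<rfloor>)"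
      using n1 n2 pos by (intro frac_le) (auto intro: less_imp_le)
    then show ?case using elim(1) by simp
  qed
qed

lemma ratio_tendsto:
  assumes t: "filterlim t at_top F" and s: "((\<lambda>k. s k / t k) \<longlongrightarrow> x) F"
    and x: "0 < x"
  shows "((\<lambda>k. R (nat \<lfloor>s k\<rfloor>) / R (nat \<lfloor>t k\<rfloor>)) \<longlongrightarrow> x powr (-\<alpha>)) F"
proof (rule order_tendstoI)
  have cont: "((\<lambda>z. z powr (-\<alpha>)) \<longlongrightarrow> x powr (-\<alpha>)) (at x)"
    using x by (intro tendsto_intros) auto
  fix b assume b: "b > x powr (-\<alpha>)"
  have "((\<lambda>z. z powr (-\<alpha>)) \<longlongrightarrow> x powr (-\<alpha>)) (at_left x)"
    by (rule tendsto_mono[OF at_le cont]) simp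
  then have e1: "eventually (\<lambda>z. z powr (-\<alpha>) < b) (at_left x)"
    using order_tendstoD(2) b by blast
  have e2: "eventually (\<lambda>z. z > 0) (at_left x)"
    using eventually_at_left_real[of 0 x] x by (auto elim: eventually_mono)
  have e3: "eventually (\<lambda>z. z < x) (at_left x)"
    by (simp add: eventually_at_filter)
  have "eventually (\<lambda>z. z powr (-\<alpha>) < b \<and> (z > 0 \<and> z < x)) (at_left x)"
    by (intro eventually_conj e1 e2 e3)
  then obtain z where zz: "z powr (-\<alpha>) < b" "z > 0" "z < x"
    using eventually_happens[of _ "at_left x"] trivial_limit_at_left_real by blast
  show "eventually (\<lambda>k. R (nat \<lfloor>s k\<rfloor>) / R (nat \<lfloor>t k\<rfloor>) < b) F"
    by (rule ratio_upper[OF t s zz(2) zz(3) zz(1)])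
next
  have cont: "((\<lambda>z. z powr (-\<alpha>)) \<longlongrightarrow> x powr (-\<alpha>)) (at x)"
    using x by (intro tendsto_intros) auto
  fix b assume b: "b < x powr (-\<alpha>)"
  have "((\<lambda>z. z powr (-\<alpha>)) \<longlongrightarrow> x powr (-\<alpha>)) (at_right x)"
    by (rule tendsto_mono[OF at_le cont]) simp
  then have e1: "eventually (\<lambda>z. z powr (-\<alpha>) > b) (at_right x)"
    using order_tendstoD(1) b by blast
  have e3: "eventually (\<lambda>z. z > x) (at_right x)"
    by (simp add: eventually_at_filter)
  have "eventually (\<lambda>z. z powr (-\<alpha>) > b \<and> z > x) (at_right x)"
    by (intro eventually_conj e1 e3)
  then obtain w where ww: "w powr (-\<alpha>) > b" "w > x"
    using eventually_happens[of _ "at_right x"] trivial_limit_at_right_real by blast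
  show "eventually (\<lambda>k. R (nat \<lfloor>s k\<rfloor>) / R (nat \<lfloor>t k\<rfloor>) > b) F"
    by (rule ratio_lower[OF t s x ww(2) ww(1)])
qed

end

definition hq :: "real \<Rightarrow> nat \<Rightarrow> real" where
  "hq u n = (\<Sum>j<n. \<Sum>i<j. (1 - u) ^ i)"

lemma hq_Suc: "hq u (Suc n) = hq u n + (\<Sum>i<n. (1 - u) ^ i)"
  by (simp add: hq_def)

lemma h_eq: "(1 - u) ^ n - 1 + real n * u = u\<^sup>2 * hq u n"
proof (induction n)
  case 0 then show ?case by (simp add: hq_def)
next
  case (Suc n)
  have geo: "1 - (1 - u) ^ n = u * (\<Sum>i<n. (1 - u) ^ i)"
    using one_diff_power_eq[of "1 - u" n] by simp
  have "(1 - u) ^ Suc n - 1 + real (Suc n) * u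
        = ((1 - u) ^ n - 1 + real n * u) + u * (1 - (1 - u) ^ n)"
    by (simp add: algebra_simps)
  also have "\<dots> = u\<^sup>2 * hq u (Suc n)"
    unfolding Suc.IH geo hq_Suc by (simp add: algebra_simps power2_eq_square)
  finally show ?case .
qed

lemma hq_nonneg: "u \<le> 1 \<Longrightarrow> hq u n \<ge> 0"
  unfolding hq_def by (intro sum_nonneg) auto

lemma hq_le: "0 \<le> u \<Longrightarrow> u \<le> 1 \<Longrightarrow> hq u n \<le> hq 0 n"
  unfolding hq_def by (intro sum_mono) (auto intro!: power_le_one)

lemma hq_ge1: "u \<le> 1 \<Longrightarrow> n \<ge> 2 \<Longrightarrow> hq u n \<ge> 1"
proof -
  assume u: "u \<le> 1" and n: "n \<ge> 2"
  have "hq u n = hq u 2 + (\<Sum>j\<in>{2..<n}. \<Sum>i<j. (1 - u) ^ i)"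
    unfolding hq_def using n by (metis lessThan_atLeast0 sum.atLeastLessThan_concat zero_le)
  moreover have "hq u 2 = 1" by (simp add: hq_def numeral_2_eq_2)
  moreover have "(\<Sum>j\<in>{2..<n}. \<Sum>i<j. (1 - u) ^ i) \<ge> 0"
    using u by (intro sum_nonneg) auto
  ultimately show ?thesis by simp
qed

lemma hq0: "2 * hq 0 n = (real n)\<^sup>2 - real n"
proof (induction n)
  case 0 then show ?case by (simp add: hq_def)
next
  case (Suc n)
  have "2 * hq 0 (Suc n) = 2 * hq 0 n + 2 * real n" by (simp add: hq_Suc)
  then show ?case using Suc.IH by (simp add: power2_eq_square algebra_simps)
qed

lemma hq_cont: "((\<lambda>k. hq (u k) n) \<longlongrightarrow> hq 0 n) F" if "(u \<longlongrightarrow> 0) F"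
  unfolding hq_def by (intro tendsto_intros that)

lemma pmf_sums_prob: "(\<lambda>n. if n \<in> A then pmf p n else 0) sums measure_pmf.prob p A"
  using sums_infsetsum_nat[OF pmf_abs_summable] by (simp add: measure_pmf_conv_infsetsum)

lemma pmf_sums1: "(\<lambda>n. pmf p n) sums 1"
  using pmf_sums_prob[of UNIV p] by simp


definition gq :: "nat pmf \<Rightarrow> real \<Rightarrow> real" where
  "gq p u = (\<Sum>n. pmf p n * hq u n)"

definition Esum :: "nat pmf \<Rightarrow> real \<Rightarrow> real \<Rightarrow> real" where
  "Esum p y q = (\<Sum>n. if real n \<ge> y then pmf p n * q ^ n else 0)"

lemma hq0_le: "hq 0 n \<le> (real n)\<^sup>2"
proof -
  have "real n \<ge> 0" "(real n)\<^sup>2 \<ge> 0" by auto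
  then show ?thesis using hq0[of n] by linarith
qed

lemma gq_summable:
  assumes var: "summable (\<lambda>n. (real n)\<^sup>2 * pmf p n)" and u: "0 \<le> u" "u \<le> 1"
  shows "summable (\<lambda>n. pmf p n * hq u n)"
proof (rule summable_comparison_test'[OF var])
  fix n
  have "hq u n \<le> (real n)\<^sup>2" using hq_le[OF u, of n] hq0_le[of n] by linarith
  then show "norm (pmf p n * hq u n) \<le> (real n)\<^sup>2 * pmf p n"
    using hq_nonneg[OF u(2), of n] by (simp add: mult.commute[of "pmf p n"] mult_right_mono)
qed

lemma gq0:
  assumes var: "summable (\<lambda>n. (real n)\<^sup>2 * pmf p n)"
    and mean: "summable (\<lambda>n. real n * pmf p n)" "(\<Sum>n. real n * pmf p n) = 1"
  shows "2 * gq p 0 = (\<Sum>n. (real n)\<^sup>2 * pmf p n) - 1"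
proof -
  have s0: "summable (\<lambda>n. pmf p n * hq 0 n)" by (rule gq_summable[OF var]) auto
  have "2 * gq p 0 = (\<Sum>n. 2 * (pmf p n * hq 0 n))"
    unfolding gq_def using s0 by (simp add: suminf_mult)
  also have "\<dots> = (\<Sum>n. (real n)\<^sup>2 * pmf p n - real n * pmf p n)"
  proof (intro suminf_cong)
    fix n
    have "2 * (pmf p n * hq 0 n) = pmf p n * (2 * hq 0 n)" by simp
    also have "\<dots> = pmf p n * ((real n)\<^sup>2 - real n)" using hq0[of n] by simp
    finally show "2 * (pmf p n * hq 0 n) = (real n)\<^sup>2 * pmf p n - real n * pmf p n"
      by (simp add: algebra_simps)
  qed
  also have "\<dots> = (\<Sum>n. (real n)\<^sup>2 * pmf p n) - (\<Sum>n. real n * pmf p n)"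
    using var mean(1) by (rule suminf_diff[symmetric])
  finally show ?thesis using mean(2) by simp
qed

lemma gq_lower:
  assumes var: "summable (\<lambda>n. (real n)\<^sup>2 * pmf p n)" and u: "0 \<le> u" "u \<le> 1"
    and n0: "n0 \<ge> 2"
  shows "gq p u \<ge> pmf p n0"
proof -
  have "pmf p n0 \<le> pmf p n0 * hq u n0"
    using hq_ge1[OF u(2) n0] by (simp add: mult_le_cancel_left1)
  also have "\<dots> = sum (\<lambda>n. pmf p n * hq u n) {n0}" by simp
  also have "\<dots> \<le> gq p u"
    unfolding gq_def using gq_summable[OF var u] hq_nonneg[OF u(2)]
    by (intro sum_le_suminf) auto
  finally show ?thesis .
qed

lemma gq_tendsto:
  assumes var: "summable (\<lambda>n. (real n)\<^sup>2 * pmf p n)"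
    and u: "(u \<longlongrightarrow> 0) F" "eventually (\<lambda>k. 0 \<le> u k \<and> u k \<le> 1) F" and F: "F \<noteq> bot"
  shows "((\<lambda>k. gq p (u k)) \<longlongrightarrow> gq p 0) F"
proof -
  have M: "summable (\<lambda>n. pmf p n * hq 0 n)" by (rule gq_summable[OF var]) auto
  have bound: "eventually (\<lambda>(n, k). norm (pmf p n * hq (u k) n) \<le> pmf p n * hq 0 n) (at_top \<times>\<^sub>F F)"
    unfolding eventually_prod_filter
  proof (intro exI conjI)
    show "eventually (\<lambda>_. True) at_top" by simp
    show "eventually (\<lambda>k. 0 \<le> u k \<and> u k \<le> 1) F" by (rule u(2))
    show "\<forall>n k. True \<longrightarrow> 0 \<le> u k \<and> u k \<le> 1 \<longrightarrow>
            (case (n, k) of (n, k) \<Rightarrow> norm (pmf p n * hq (u k) n) \<le> pmf p n * hq 0 n)"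
      using hq_le hq_nonneg by (auto intro!: mult_left_mono)
  qed
  have lim: "\<And>n. ((\<lambda>k. pmf p n * hq (u k) n) \<longlongrightarrow> pmf p n * hq 0 n) F"
    by (intro tendsto_intros hq_cont u(1))
  show ?thesis
    unfolding gq_def using tannerys_theorem[OF lim bound M F] by simp
qed

lemma fixpoint_eq:
  assumes mean: "summable (\<lambda>n. real n * pmf p n)" "(\<Sum>n. real n * pmf p n) = 1"
    and var: "summable (\<lambda>n. (real n)\<^sup>2 * pmf p n)"
    and q: "0 \<le> q" "q \<le> 1"
    and fx: "q = (\<Sum>n\<in>{n. real n < y}. pmf p n * q ^ n)"
  shows "(1 - q)\<^sup>2 * gq p (1 - q) = Esum p y q"
proof -
  define u where "u = 1 - q"
  have u: "0 \<le> u" "u \<le> 1" using q by (auto simp: u_def)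
  have s1: "summable (\<lambda>n. pmf p n)" using pmf_sums1 sums_summable by blast
  have sq: "summable (\<lambda>n. pmf p n * q ^ n)"
    by (rule summable_comparison_test'[OF s1]) (use q in \<open>auto intro!: mult_left_le power_le_one\<close>)
  have sE: "summable (\<lambda>n. if real n \<ge> y then pmf p n * q ^ n else 0)"
    by (rule summable_comparison_test'[OF sq]) (use q in auto)
  have finb: "finite {n::nat. real n < y}"
    by (rule finite_subset[of _ "{..nat \<lceil>y\<rceil>}"]) (auto, linarith)
  have sL: "(\<Sum>n. if real n < y then pmf p n * q ^ n else 0) = (\<Sum>n\<in>{n. real n < y}. pmf p n * q ^ n)"
    by (subst suminf_finite[OF finb]) auto
  have sLs: "summable (\<lambda>n. if real n < y then pmf p n * q ^ n else 0)"
    by (rule summable_comparison_test'[OF sq]) (use q in auto)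
  have split: "(\<Sum>n. pmf p n * q ^ n) = q + Esum p y q"
  proof -
    have "(\<Sum>n. pmf p n * q ^ n) = (\<Sum>n. (if real n < y then pmf p n * q ^ n else 0)
                                        + (if real n \<ge> y then pmf p n * q ^ n else 0))"
      by (intro suminf_cong) auto
    also have "\<dots> = q + Esum p y q"
      unfolding Esum_def using suminf_add[OF sLs sE] sL fx by simp
    finally show ?thesis .
  qed
  have "(\<Sum>n. pmf p n * (q ^ n - 1 + real n * u)) =
        (\<Sum>n. pmf p n * q ^ n) - (\<Sum>n. pmf p n) + u * (\<Sum>n. real n * pmf p n)"
  proof -
    have "(\<Sum>n. pmf p n * (q ^ n - 1 + real n * u)) =
          (\<Sum>n. (pmf p n * q ^ n - pmf p n) + u * (real n * pmf p n))"
      by (intro suminf_cong) (simp add: algebra_simps)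
    also have "\<dots> = (\<Sum>n. pmf p n * q ^ n - pmf p n) + (\<Sum>n. u * (real n * pmf p n))"
      by (intro suminf_add[symmetric] summable_diff sq s1 summable_mult mean(1))
    also have "\<dots> = (\<Sum>n. pmf p n * q ^ n) - (\<Sum>n. pmf p n) + u * (\<Sum>n. real n * pmf p n)"
      using suminf_diff[OF sq s1] suminf_mult[OF mean(1)] by simp
    finally show ?thesis .
  qed
  also have "\<dots> = Esum p y q"
    using split mean(2) sums_unique[OF pmf_sums1] u_def by simp
  finally have A: "(\<Sum>n. pmf p n * (q ^ n - 1 + real n * u)) = Esum p y q" .
  have "(\<Sum>n. pmf p n * (q ^ n - 1 + real n * u)) = (\<Sum>n. u\<^sup>2 * (pmf p n * hq u n))"
  proof (intro suminf_cong)
    fix n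
    have "q ^ n - 1 + real n * u = u\<^sup>2 * hq u n" using h_eq[of u n] u_def by simp
    then show "pmf p n * (q ^ n - 1 + real n * u) = u\<^sup>2 * (pmf p n * hq u n)" by simp
  qed
  also have "\<dots> = u\<^sup>2 * gq p u"
    unfolding gq_def using gq_summable[OF var u] by (simp add: suminf_mult)
  finally show ?thesis using A u_def by simp
qed

lemma ln_1m_bounds:
  fixes u :: real
  assumes "0 \<le> u" "u < 1"
  shows "ln (1 - u) \<le> - u" "ln (1 - u) \<ge> - (u / (1 - u))"
proof -
  show "ln (1 - u) \<le> - u" using ln_le_minus_one[of "1 - u"] assms by simp
  have "ln (1 / (1 - u)) \<le> 1 / (1 - u) - 1" using ln_le_minus_one[of "1 / (1 - u)"] assms by simp
  moreover have "ln (1 / (1 - u)) = - ln (1 - u)" using assms by (simp add: ln_div)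
  moreover have "1 / (1 - u) - 1 = u / (1 - u)" using assms by (simp add: field_simps)
  ultimately show "ln (1 - u) \<ge> - (u / (1 - u))" by simp
qed

lemma exp_limit_gen:
  fixes u :: "nat \<Rightarrow> real"
  assumes u0: "(u \<longlongrightarrow> 0) sequentially" and nn: "\<And>k. u k \<ge> 0"
    and ku: "((\<lambda>k. real k * u k) \<longlongrightarrow> L) sequentially"
  shows "((\<lambda>k. (1 - u k) ^ k) \<longlongrightarrow> exp (- L)) sequentially"
proof -
  have ev: "eventually (\<lambda>k. u k < 1/2) sequentially"
    using order_tendstoD(2)[OF u0, of "1/2"] by simp
  have lim1: "((\<lambda>k. - (real k * u k) / (1 - u k)) \<longlongrightarrow> - L / (1 - 0)) sequentially"
    by (intro tendsto_intros ku u0) simp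
  have lim2: "((\<lambda>k. - (real k * u k)) \<longlongrightarrow> - L) sequentially"
    by (intro tendsto_intros ku)
  have lo: "eventually (\<lambda>k. - (real k * u k) / (1 - u k) \<le> real k * ln (1 - u k)) sequentially"
    using ev
  proof eventually_elim
    case (elim k)
    have "- (u k / (1 - u k)) \<le> ln (1 - u k)" using ln_1m_bounds(2)[of "u k"] nn[of k] elim by simp
    then have "real k * (- (u k / (1 - u k))) \<le> real k * ln (1 - u k)"
      by (intro mult_left_mono) auto
    then show ?case by simp
  qed
  have hi: "eventually (\<lambda>k. real k * ln (1 - u k) \<le> - (real k * u k)) sequentially"
    using ev
  proof eventually_elim
    case (elim k)
    have "ln (1 - u k) \<le> - u k" using ln_1m_bounds(1)[of "u k"] nn[of k] elim by simp
    then have "real k * ln (1 - u k) \<le> real k * (- u k)"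
      by (intro mult_left_mono) auto
    then show ?case by simp
  qed
  have "((\<lambda>k. real k * ln (1 - u k)) \<longlongrightarrow> - L) sequentially"
    using tendsto_sandwich[OF lo hi] lim1 lim2 by simp
  then have "((\<lambda>k. exp (real k * ln (1 - u k))) \<longlongrightarrow> exp (- L)) sequentially"
    by (rule tendsto_exp)
  moreover have "eventually (\<lambda>k. exp (real k * ln (1 - u k)) = (1 - u k) ^ k) sequentially"
    using ev
  proof eventually_elim
    case (elim k)
    then have "1 - u k > 0" by simp
    then show ?case by (simp add: exp_of_nat_mult)
  qed
  ultimately show ?thesis using tendsto_cong by force
qed

lemma exists_n0:
  assumes crit: "critical_law p"
  shows "\<exists>n0\<ge>2. pmf p n0 > 0"
proof (rule ccontr)
  assume "\<not> ?thesis"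
  then have z: "\<And>n. n \<ge> 2 \<Longrightarrow> pmf p n = 0" by (meson not_le pmf_nonneg order.not_eq_order_implies_strict)
  have mean: "(\<Sum>n. real n * pmf p n) = 1" using crit by (simp add: critical_law_def)
  have "(\<Sum>n. real n * pmf p n) = (\<Sum>n\<in>{1}. real n * pmf p n)"
  proof (rule suminf_finite)
    fix n assume "n \<notin> {1::nat}"
    then have "n = 0 \<or> n \<ge> 2" by auto
    then show "real n * pmf p n = 0" using z by auto
  qed simp
  then have p1: "pmf p 1 = 1" using mean by simp
  have "p = return_pmf 1"
  proof (rule pmf_eqI)
    fix i
    show "pmf p i = pmf (return_pmf 1) i"
    proof (cases "i = 1")
      case True then show ?thesis using p1 by simp
    next
      case False
      have "measure_pmf.prob p {1, i} = pmf p 1 + pmf p i"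
        using False by (subst measure_measure_pmf_finite) auto
      moreover have "measure_pmf.prob p {1, i} \<le> 1" by simp
      ultimately have "pmf p i \<le> 0" using p1 by simp
      then show ?thesis using False pmf_nonneg[of p i] by simp
    qed
  qed
  then show False using crit by (simp add: critical_law_def)
qed


lemma tail_anti: "m \<le> n \<Longrightarrow> tail_fun p (real n) \<le> tail_fun p (real m)"
  unfolding tail_fun_def by (intro measure_pmf.finite_measure_mono) auto

lemma floor_lt_nat: "(t::real) \<ge> 0 \<Longrightarrow> (t < real i) \<longleftrightarrow> (real (nat \<lfloor>t\<rfloor>) < real i)"
proof -
  assume t: "t \<ge> 0"
  have e: "real (nat \<lfloor>t\<rfloor>) = of_int \<lfloor>t\<rfloor>" using t by simp
  have "(t < real i) \<longleftrightarrow> \<not> (of_int (int i) \<le> t)" by auto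
  also have "\<dots> \<longleftrightarrow> \<not> (int i \<le> \<lfloor>t\<rfloor>)" by (simp only: le_floor_iff)
  also have "\<dots> \<longleftrightarrow> (of_int \<lfloor>t\<rfloor> < real i)" by linarith
  finally show ?thesis using e by simp
qed

lemma tail_floor:
  assumes "t \<ge> 0"
  shows "tail_fun p t = tail_fun p (real (nat \<lfloor>t\<rfloor>))"
proof -
  have "{i::nat. real i > t} = {i. real i > real (nat \<lfloor>t\<rfloor>)}"
    using floor_lt_nat[OF assms] by auto
  then show ?thesis unfolding tail_fun_def by simp
qed

lemma prob_ge_lower:
  assumes "y \<ge> 0"
  shows "tail_fun p (real (nat \<lfloor>y\<rfloor>)) \<le> measure_pmf.prob p {n. real n \<ge> y}"
proof -
  have "{i::nat. real i > real (nat \<lfloor>y\<rfloor>)} \<subseteq> {n. real n \<ge> y}"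
  proof
    fix i assume "i \<in> {i::nat. real i > real (nat \<lfloor>y\<rfloor>)}"
    then have "y < real i" using floor_lt_nat[OF assms, of i] by simp
    then show "i \<in> {n. real n \<ge> y}" by simp
  qed
  then show ?thesis unfolding tail_fun_def by (intro measure_pmf.finite_measure_mono) auto
qed

lemma prob_ge_upper:
  assumes "y \<ge> 1"
  shows "measure_pmf.prob p {n. real n \<ge> y} \<le> tail_fun p (real (nat \<lfloor>y - 1\<rfloor>))"
proof -
  have "{n::nat. real n \<ge> y} \<subseteq> {i. real i > real (nat \<lfloor>y - 1\<rfloor>)}"
    using floor_lt_nat[of "y - 1"] assms by force
  then show ?thesis unfolding tail_fun_def by (intro measure_pmf.finite_measure_mono) auto
qed

lemma prob_ge_ceil:
  "tail_fun p (real (nat \<lceil>y\<rceil>)) \<le> measure_pmf.prob p {n. real n \<ge> y}"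
proof -
  have "{i::nat. real i > real (nat \<lceil>y\<rceil>)} \<subseteq> {n. real n \<ge> y}"
    by auto linarith
  then show ?thesis unfolding tail_fun_def by (intro measure_pmf.finite_measure_mono) auto
qed


lemma rv_inst:
  fixes p :: "nat pmf" and l :: "real \<Rightarrow> real" and \<alpha> :: real
  assumes tail: "\<And>n::nat. n \<ge> 1 \<Longrightarrow> tail_fun p (real n) = real n powr (-\<alpha>) * l (real n)"
    and sv: "slowly_varying l" and alpha: "\<alpha> > 0"
  shows "rvR (\<lambda>n. tail_fun p (real n)) \<alpha>"
proof
  fix m n :: nat assume "m \<le> n"
  then show "tail_fun p (real n) \<le> tail_fun p (real m)" by (rule tail_anti)
next
  fix n :: nat
  from sv obtain X where X: "\<And>x. x \<ge> X \<Longrightarrow> l x > 0"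
    unfolding slowly_varying_def eventually_at_top_linorder by blast
  define m where "m = max n (max 1 (nat \<lceil>X\<rceil>))"
  have m: "m \<ge> 1" "real m \<ge> X" "n \<le> m" unfolding m_def by (auto, linarith)
  have "tail_fun p (real m) > 0" using tail[OF m(1)] X[OF m(2)] m(1) by simp
  also have "tail_fun p (real m) \<le> tail_fun p (real n)" using tail_anti[OF m(3)] .
  finally show "tail_fun p (real n) > 0" .
next
  show "\<alpha> > 0" by (rule alpha)
next
  fix a b :: nat assume a: "1 \<le> a" and b: "1 \<le> b"
  have svl: "((\<lambda>x. l ((real a / real b) * x) / l x) \<longlongrightarrow> 1) at_top"
  proof -
    have "real a / real b > 0" using a b by simp
    then show ?thesis using sv unfolding slowly_varying_def by blast
  qed
  have fb: "filterlim (\<lambda>n::nat. real b * real n) at_top sequentially"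
    by (rule filterlim_tendsto_pos_mult_at_top[OF tendsto_const _ filterlim_real_sequentially])
       (use b in simp)
  have lr0: "((\<lambda>n. l ((real a / real b) * (real b * real n)) / l (real b * real n)) \<longlongrightarrow> 1) sequentially"
    using filterlim_compose[OF svl fb] by simp
  have lr: "((\<lambda>n. l (real (a * n)) / l (real (b * n))) \<longlongrightarrow> 1) sequentially"
    using lr0 b by (simp add: mult.assoc[symmetric])
  have "((\<lambda>n. (real a / real b) powr (-\<alpha>) * (l (real (a * n)) / l (real (b * n))))
          \<longlongrightarrow> (real a / real b) powr (-\<alpha>) * 1) sequentially"
    by (intro tendsto_intros lr)
  moreover have "eventually (\<lambda>n. (real a / real b) powr (-\<alpha>) * (l (real (a * n)) / l (real (b * n)))
        = tail_fun p (real (a * n)) / tail_fun p (real (b * n))) sequentially"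
    using eventually_ge_at_top[of "1::nat"]
  proof eventually_elim
    case (elim n)
    have an: "a * n \<ge> 1" "b * n \<ge> 1" using a b elim by auto
    have "tail_fun p (real (a * n)) / tail_fun p (real (b * n))
        = (real (a * n) powr (-\<alpha>) / real (b * n) powr (-\<alpha>)) * (l (real (a * n)) / l (real (b * n)))"
      using tail[OF an(1)] tail[OF an(2)] by simp
    also have "real (a * n) powr (-\<alpha>) / real (b * n) powr (-\<alpha>) = (real (a * n) / real (b * n)) powr (-\<alpha>)"
      by (rule powr_divide[symmetric])
    also have "real (a * n) / real (b * n) = real a / real b" using elim by simp
    finally show ?case by simp
  qed
  ultimately show "((\<lambda>n. tail_fun p (real (a * n)) / tail_fun p (real (b * n)))
          \<longlongrightarrow> (real a / real b) powr (-\<alpha>)) sequentially"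
    using tendsto_cong by force
qed


lemma prob_ge_sums: "(\<lambda>n. if y \<le> real n then pmf p n else 0) sums measure_pmf.prob p {n. real n \<ge> y}"
  using pmf_sums_prob[of "{n. real n \<ge> y}" p] by simp

lemma tail_sums: "(\<lambda>n. if real M < real n then pmf p n else 0) sums tail_fun p (real M)"
  using pmf_sums_prob[of "{n. real n > real M}" p] unfolding tail_fun_def by simp

lemma Esum_summable:
  assumes "0 \<le> q" "q \<le> 1"
  shows "summable (\<lambda>n. if y \<le> real n then pmf p n * q ^ n else 0)"
proof (rule summable_comparison_test'[OF sums_summable[OF prob_ge_sums[of y p]]])
  fix n show "norm (if y \<le> real n then pmf p n * q ^ n else 0) \<le> (if y \<le> real n then pmf p n else 0)"
    using assms by (auto intro!: mult_left_le power_le_one)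
qed

lemma Esum_bounds:
  assumes "0 \<le> q" "q \<le> 1"
  shows "Esum p y q \<le> measure_pmf.prob p {n. real n \<ge> y}" "Esum p y q \<ge> 0"
proof -
  show "Esum p y q \<le> measure_pmf.prob p {n. real n \<ge> y}"
    unfolding Esum_def sums_unique[OF prob_ge_sums[of y p]]
    by (rule suminf_le[OF _ Esum_summable[OF assms] sums_summable[OF prob_ge_sums[of y p]]])
       (use assms in \<open>auto intro!: mult_left_le power_le_one\<close>)
  show "Esum p y q \<ge> 0"
    unfolding Esum_def by (rule suminf_nonneg[OF Esum_summable[OF assms]]) (use assms in auto)
qed

lemma tailcut:
  assumes q: "0 \<le> q" "q \<le> 1"
  shows "measure_pmf.prob p {n. real n \<ge> y} - Esum p y q
         \<le> real M * (1 - q) * measure_pmf.prob p {n. real n \<ge> y} + tail_fun p (real M)"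
proof -
  have sP: "summable (\<lambda>n. if y \<le> real n then pmf p n else 0)"
    using prob_ge_sums sums_summable by blast
  have sT: "summable (\<lambda>n. if real M < real n then pmf p n else 0)"
    using tail_sums sums_summable by blast
  have sE: "summable (\<lambda>n. if y \<le> real n then pmf p n * q ^ n else 0)"
    by (rule Esum_summable[OF q])
  have "measure_pmf.prob p {n. real n \<ge> y} - Esum p y q =
        (\<Sum>n. (if y \<le> real n then pmf p n else 0) - (if y \<le> real n then pmf p n * q ^ n else 0))"
    unfolding Esum_def sums_unique[OF prob_ge_sums[of y p]] by (rule suminf_diff[OF sP sE])
  also have "\<dots> \<le> (\<Sum>n. real M * (1 - q) * (if y \<le> real n then pmf p n else 0)
                         + (if real M < real n then pmf p n else 0))"
  proof (rule suminf_le)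
    fix n
    show "(if y \<le> real n then pmf p n else 0) - (if y \<le> real n then pmf p n * q ^ n else 0)
          \<le> real M * (1 - q) * (if y \<le> real n then pmf p n else 0)
            + (if real M < real n then pmf p n else 0)"
    proof (cases "y \<le> real n")
      case False then show ?thesis by simp
    next
      case True
      have pn: "pmf p n \<ge> 0" by simp
      have "1 - q ^ n \<le> real M * (1 - q) + (if real M < real n then 1 else 0)"
      proof (cases "n \<le> M")
        case True
        have "1 + real n * (q - 1) \<le> (1 + (q - 1)) ^ n"
          by (rule Bernoulli_inequality) (use q in simp)
        then have "1 - q ^ n \<le> real n * (1 - q)" by (simp add: algebra_simps)
        also have "\<dots> \<le> real M * (1 - q)" using True q by (intro mult_right_mono) auto
        finally show ?thesis by simp
      next
        case False
        have "q ^ n \<ge> 0" using q by simp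
        moreover have "real M * (1 - q) \<ge> 0" using q by simp
        ultimately show ?thesis using False by simp
      qed
      then have "pmf p n * (1 - q ^ n) \<le> pmf p n * (real M * (1 - q) + (if real M < real n then 1 else 0))"
        by (rule mult_left_mono) simp
      then show ?thesis using True by (cases "M < n") (simp_all add: algebra_simps)
    qed
  next
    show "summable (\<lambda>n. (if y \<le> real n then pmf p n else 0) - (if y \<le> real n then pmf p n * q ^ n else 0))"
      by (rule summable_diff[OF sP sE])
    show "summable (\<lambda>n. real M * (1 - q) * (if y \<le> real n then pmf p n else 0)
                         + (if real M < real n then pmf p n else 0))"
      by (intro summable_add summable_mult sP sT)
  qed
  also have "\<dots> = real M * (1 - q) * measure_pmf.prob p {n. real n \<ge> y} + tail_fun p (real M)"
    using sums_unique[OF prob_ge_sums[of y p]] sums_unique[OF tail_sums[of M p]]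
      suminf_add[OF summable_mult[OF sP] sT] suminf_mult[OF sP] by simp
  finally show ?thesis .
qed

theorem theorem1:
  fixes p :: "nat pmf" and l :: "real \<Rightarrow> real" and \<alpha> \<sigma> :: real
    and \<phi> :: "real \<Rightarrow> real"
  assumes crit: "critical_law p"
    and tail: "\<And>n::nat. n \<ge> 1 \<Longrightarrow> tail_fun p (real n) = real n powr (-\<alpha>) * l (real n)"
    and sv: "slowly_varying l"
    and alpha: "\<alpha> > 2"
    and phi_pos: "\<And>\<epsilon>. 0 < \<epsilon> \<Longrightarrow> \<epsilon> < 1 \<Longrightarrow> \<phi> \<epsilon> \<ge> 0"
    and phi_inv: "((\<lambda>\<epsilon>. tail_fun p (\<phi> \<epsilon>) / \<epsilon>) \<longlongrightarrow> 1) (at_right 0)"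
    and var_summable: "summable (\<lambda>n. (real n)\<^sup>2 * pmf p n)"
    and sigma: "\<sigma> > 0" "\<sigma>\<^sup>2 = (\<Sum>n. (real n)\<^sup>2 * pmf p n) - 1"
    and x: "x > 0"
  shows "(\<lambda>k. GW_max_lt_prob p k (x * \<phi> (1 / (real k)\<^sup>2)))
           \<longlonglongrightarrow> exp (- (sqrt 2 / \<sigma>) * x powr (- \<alpha> / 2))"
proof -
  have alpha0: "\<alpha> > 0" using alpha by simp
  interpret rv: rvR "\<lambda>n. tail_fun p (real n)" \<alpha> by (rule rv_inst[OF tail sv alpha0])
  have mean: "summable (\<lambda>n. real n * pmf p n)" "(\<Sum>n. real n * pmf p n) = 1"
    using crit unfolding critical_law_def by auto
  have inv0: "((\<lambda>k::nat. 1 / (real k)\<^sup>2) \<longlongrightarrow> 0) sequentially" by real_asymp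
  define ph where "ph k = \<phi> (1 / (real k)\<^sup>2)" for k :: nat
  have eps: "filterlim (\<lambda>k::nat. 1 / (real k)\<^sup>2) (at_right 0) sequentially"
  proof (rule tendsto_imp_filterlim_at_right[OF inv0])
    show "eventually (\<lambda>k::nat. 1 / (real k)\<^sup>2 > 0) sequentially"
      using eventually_ge_at_top[of "1::nat"] by eventually_elim auto
  qed
  have A1: "((\<lambda>k. tail_fun p (ph k) / (1 / (real k)\<^sup>2)) \<longlongrightarrow> 1) sequentially"
    unfolding ph_def using filterlim_compose[OF phi_inv eps] by simp
  have ph_nn: "eventually (\<lambda>k. ph k \<ge> 0) sequentially"
    using eventually_ge_at_top[of "2::nat"]
  proof eventually_elim
    case (elim k)
    have k2: "real k \<ge> 2" using elim by simp
    have "2 * 2 \<le> real k * real k" by (rule mult_mono) (use k2 in auto)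
    then have "(real k)\<^sup>2 > 1" by (simp add: power2_eq_square)
    then show ?case unfolding ph_def using elim by (intro phi_pos) (auto simp: divide_less_eq_1)
  qed
  define Rph where "Rph k = tail_fun p (real (nat \<lfloor>ph k\<rfloor>))" for k
  have Rph_pos: "Rph k > 0" for k unfolding Rph_def by (rule rv.pos)
  have A2: "((\<lambda>k. (real k)\<^sup>2 * Rph k) \<longlongrightarrow> 1) sequentially"
  proof -
    have ev: "eventually (\<lambda>k. tail_fun p (ph k) / (1 / (real k)\<^sup>2) = (real k)\<^sup>2 * Rph k) sequentially"
      using ph_nn
    proof eventually_elim
      case (elim k)
      then show ?case unfolding Rph_def using tail_floor[OF elim, of p] by simp
    qed
    show ?thesis by (rule tendsto_cong[THEN iffD1, OF ev A1])
  qed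
  have Rph0: "(Rph \<longlongrightarrow> 0) sequentially"
  proof -
    have L: "((\<lambda>k. ((real k)\<^sup>2 * Rph k) * (1 / (real k)\<^sup>2)) \<longlongrightarrow> 0) sequentially"
      using tendsto_mult[OF A2 inv0] by simp
    have ev: "eventually (\<lambda>k. ((real k)\<^sup>2 * Rph k) * (1 / (real k)\<^sup>2) = Rph k) sequentially"
      using eventually_ge_at_top[of "1::nat"] by eventually_elim simp
    show ?thesis by (rule tendsto_cong[THEN iffD1, OF ev L])
  qed
  have ph_top: "filterlim ph at_top sequentially"
    unfolding filterlim_at_top
  proof
    fix Z :: real
    define N where "N = nat \<lceil>Z\<rceil>"
    have "tail_fun p (real N) > 0" by (rule rv.pos)
    then have "eventually (\<lambda>k. Rph k < tail_fun p (real N)) sequentially"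
      using order_tendstoD(2)[OF Rph0] by blast
    then show "eventually (\<lambda>k. ph k \<ge> Z) sequentially"
    proof eventually_elim
      case (elim k)
      have "\<not> (nat \<lfloor>ph k\<rfloor> \<le> N)"
      proof
        assume "nat \<lfloor>ph k\<rfloor> \<le> N"
        then have "tail_fun p (real N) \<le> Rph k" unfolding Rph_def by (rule rv.anti)
        then show False using elim by simp
      qed
      then have "N < nat \<lfloor>ph k\<rfloor>" by simp
      then have "int N < \<lfloor>ph k\<rfloor>" by linarith
      moreover have "Z \<le> real_of_int \<lceil>Z\<rceil>" by (rule le_of_int_ceiling)
      moreover have "real_of_int \<lceil>Z\<rceil> \<le> real N" unfolding N_def by linarith
      moreover have "real_of_int \<lfloor>ph k\<rfloor> \<le> ph k" by (rule of_int_floor_le)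
      ultimately show "ph k \<ge> Z" by linarith
    qed
  qed
  have ph_pos: "eventually (\<lambda>k. ph k > 0) sequentially"
    using ph_top by (simp add: filterlim_at_top_dense)
  define y where "y k = x * ph k" for k
  define P where "P k = measure_pmf.prob p {n. real n \<ge> y k}" for k
  have y_top: "filterlim y at_top sequentially"
    unfolding y_def by (rule filterlim_tendsto_pos_mult_at_top[OF tendsto_const x ph_top])
  have ratio1: "((\<lambda>k. tail_fun p (real (nat \<lfloor>y k\<rfloor>)) / Rph k) \<longlongrightarrow> x powr (-\<alpha>)) sequentially"
    unfolding Rph_def
  proof (rule rv.ratio_tendsto[OF ph_top _ x])
    have ev: "eventually (\<lambda>k. x = y k / ph k) sequentially"
      using ph_pos by eventually_elim (simp add: y_def)
    show "((\<lambda>k. y k / ph k) \<longlongrightarrow> x) sequentially"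
      by (rule tendsto_cong[THEN iffD1, OF ev tendsto_const])
  qed
  have ratio2: "((\<lambda>k. tail_fun p (real (nat \<lfloor>y k - 1\<rfloor>)) / Rph k) \<longlongrightarrow> x powr (-\<alpha>)) sequentially"
    unfolding Rph_def
  proof (rule rv.ratio_tendsto[OF ph_top _ x])
    have "((\<lambda>k. x - 1 / ph k) \<longlongrightarrow> x - 0) sequentially"
      by (intro tendsto_intros tendsto_divide_0[OF tendsto_const]
          filterlim_at_top_imp_at_infinity[OF ph_top])
    then have L: "((\<lambda>k. x - 1 / ph k) \<longlongrightarrow> x) sequentially" by simp
    have ev: "eventually (\<lambda>k. x - 1 / ph k = (y k - 1) / ph k) sequentially"
      using ph_pos by eventually_elim (simp add: y_def diff_divide_distrib)
    show "((\<lambda>k. (y k - 1) / ph k) \<longlongrightarrow> x) sequentially"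
      by (rule tendsto_cong[THEN iffD1, OF ev L])
  qed
  have y1: "eventually (\<lambda>k. y k \<ge> 1) sequentially"
    using y_top by (simp add: filterlim_at_top)
  have PR: "((\<lambda>k. P k / Rph k) \<longlongrightarrow> x powr (-\<alpha>)) sequentially"
  proof (rule tendsto_sandwich[OF _ _ ratio1 ratio2])
    show "eventually (\<lambda>k. tail_fun p (real (nat \<lfloor>y k\<rfloor>)) / Rph k \<le> P k / Rph k) sequentially"
      using y1
    proof eventually_elim
      case (elim k)
      have "tail_fun p (real (nat \<lfloor>y k\<rfloor>)) \<le> P k" unfolding P_def by (rule prob_ge_lower) (use elim in simp)
      then show ?case by (rule divide_right_mono) (use Rph_pos[of k] in simp)
    qed
    show "eventually (\<lambda>k. P k / Rph k \<le> tail_fun p (real (nat \<lfloor>y k - 1\<rfloor>)) / Rph k) sequentially"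
      using y1
    proof eventually_elim
      case (elim k)
      have "P k \<le> tail_fun p (real (nat \<lfloor>y k - 1\<rfloor>))" unfolding P_def by (rule prob_ge_upper) (use elim in simp)
      then show ?case by (rule divide_right_mono) (use Rph_pos[of k] in simp)
    qed
  qed
  have KP: "((\<lambda>k. (real k)\<^sup>2 * P k) \<longlongrightarrow> x powr (-\<alpha>)) sequentially"
  proof -
    have "((\<lambda>k. ((real k)\<^sup>2 * Rph k) * (P k / Rph k)) \<longlongrightarrow> 1 * x powr (-\<alpha>)) sequentially"
      by (rule tendsto_mult[OF A2 PR])
    moreover have "((real k)\<^sup>2 * Rph k) * (P k / Rph k) = (real k)\<^sup>2 * P k" for k
      using Rph_pos[of k] by simp
    ultimately show ?thesis by simp
  qed
  define q where "q k = G p (y k) 1" for k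
  define u where "u k = 1 - q k" for k
  have q01: "0 \<le> q k" "q k \<le> 1" for k unfolding q_def using G_nonneg G_le1 by auto
  have u01: "0 \<le> u k" "u k \<le> 1" for k unfolding u_def using q01[of k] by auto
  have GWq: "GW_max_lt_prob p k (x * \<phi> (1 / (real k)\<^sup>2)) = (1 - u k) ^ k" if "k \<ge> 1" for k
  proof -
    have "GW_max_lt_prob p k (x * \<phi> (1 / (real k)\<^sup>2)) = G p (y k) k"
      by (simp add: G_eq_GW y_def ph_def)
    also have "\<dots> = q k ^ k" unfolding q_def by (rule G_pow[OF that])
    finally show ?thesis by (simp add: u_def)
  qed
  define E where "E k = Esum p (y k) (q k)" for k
  have equ: "(u k)\<^sup>2 * gq p (u k) = E k" for k
    unfolding u_def E_def
    by (rule fixpoint_eq[OF mean var_summable q01]) (use G_fix[of p "y k"] in \<open>simp add: q_def\<close>)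
  have EP_le: "E k \<le> P k" "E k \<ge> 0" for k
    unfolding E_def P_def using Esum_bounds[OF q01] by auto
  obtain n0 where n0: "n0 \<ge> 2" "pmf p n0 > 0" using exists_n0[OF crit] by auto
  define c0 where "c0 = pmf p n0"
  have c0: "c0 > 0" using n0 by (simp add: c0_def)
  have gq_ge: "gq p (u k) \<ge> c0" for k
    unfolding c0_def by (rule gq_lower[OF var_summable u01 n0(1)])
  have u2le: "(u k)\<^sup>2 \<le> P k / c0" for k
  proof -
    have "(u k)\<^sup>2 * c0 \<le> (u k)\<^sup>2 * gq p (u k)" by (intro mult_left_mono gq_ge) simp
    also have "\<dots> \<le> P k" using equ EP_le by simp
    finally show ?thesis using c0 by (simp add: pos_le_divide_eq)
  qed
  have P0: "(P \<longlongrightarrow> 0) sequentially"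
  proof -
    have L: "((\<lambda>k. ((real k)\<^sup>2 * P k) * (1 / (real k)\<^sup>2)) \<longlongrightarrow> 0) sequentially"
      using tendsto_mult[OF KP inv0] by simp
    have ev: "eventually (\<lambda>k. ((real k)\<^sup>2 * P k) * (1 / (real k)\<^sup>2) = P k) sequentially"
      using eventually_ge_at_top[of "1::nat"] by eventually_elim simp
    show ?thesis by (rule tendsto_cong[THEN iffD1, OF ev L])
  qed
  have u0: "(u \<longlongrightarrow> 0) sequentially"
  proof (rule tendsto_sandwich[of "\<lambda>_. 0" _ _ "\<lambda>k. sqrt (P k / c0)"])
    show "eventually (\<lambda>k. 0 \<le> u k) sequentially" using u01 by simp
    show "eventually (\<lambda>k. u k \<le> sqrt (P k / c0)) sequentially"
    proof (intro always_eventually allI)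
      fix k
      have "u k = sqrt ((u k)\<^sup>2)" using u01[of k] by simp
      also have "\<dots> \<le> sqrt (P k / c0)" by (rule real_sqrt_le_mono[OF u2le])
      finally show "u k \<le> sqrt (P k / c0)" .
    qed
    show "((\<lambda>_. 0) \<longlongrightarrow> 0) sequentially" by simp
    have "((\<lambda>k. sqrt (P k / c0)) \<longlongrightarrow> sqrt (0 / c0)) sequentially"
      by (intro tendsto_intros P0) (use c0 in simp)
    then show "((\<lambda>k. sqrt (P k / c0)) \<longlongrightarrow> 0) sequentially" by simp
  qed
  have gq0v: "gq p 0 = \<sigma>\<^sup>2 / 2"
    using gq0[OF var_summable mean] sigma(2) by simp
  have gqlim: "((\<lambda>k. gq p (u k)) \<longlongrightarrow> \<sigma>\<^sup>2 / 2) sequentially"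
    using gq_tendsto[OF var_summable u0 _ trivial_limit_sequentially] u01 gq0v by simp
  define T where "T k = (\<Sum>n. if y k \<le> real n then (real n)\<^sup>2 * pmf p n else 0)" for k
  have T0: "(T \<longlongrightarrow> 0) sequentially"
  proof -
    have lim: "((\<lambda>k. if y k \<le> real n then (real n)\<^sup>2 * pmf p n else 0) \<longlongrightarrow> 0) sequentially" for n
    proof (rule tendsto_eventually)
      have "eventually (\<lambda>k. y k \<ge> real n + 1) sequentially"
        using y_top by (simp add: filterlim_at_top)
      then show "eventually (\<lambda>k. (if y k \<le> real n then (real n)\<^sup>2 * pmf p n else 0) = 0) sequentially"
        by eventually_elim auto
    qed
    have bound: "eventually (\<lambda>(n, k). norm (if y k \<le> real n then (real n)\<^sup>2 * pmf p n else 0)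
                   \<le> (real n)\<^sup>2 * pmf p n) (at_top \<times>\<^sub>F sequentially)"
      by (intro always_eventually) auto
    show ?thesis
      unfolding T_def using tannerys_theorem[OF lim bound var_summable trivial_limit_sequentially] by simp
  qed
  have sTk: "summable (\<lambda>n. if y k \<le> real n then (real n)\<^sup>2 * pmf p n else 0)" for k
    by (rule summable_comparison_test'[OF var_summable]) auto
  have yPT: "(y k)\<^sup>2 * P k \<le> T k" if "y k \<ge> 0" for k
  proof -
    have sP: "summable (\<lambda>n. if y k \<le> real n then pmf p n else 0)"
      using prob_ge_sums sums_summable by blast
    have "(y k)\<^sup>2 * P k = (\<Sum>n. (y k)\<^sup>2 * (if y k \<le> real n then pmf p n else 0))"
      unfolding P_def sums_unique[OF prob_ge_sums[of "y k" p]] by (rule suminf_mult[OF sP, symmetric])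
    also have "\<dots> \<le> T k" unfolding T_def
    proof (rule suminf_le[OF _ summable_mult[OF sP] sTk])
      fix n
      show "(y k)\<^sup>2 * (if y k \<le> real n then pmf p n else 0)
            \<le> (if y k \<le> real n then (real n)\<^sup>2 * pmf p n else 0)"
      proof (cases "y k \<le> real n")
        case True
        then have "(y k)\<^sup>2 \<le> (real n)\<^sup>2" using that by (intro power_mono) auto
        then show ?thesis using True by (simp add: mult_right_mono)
      qed simp
    qed
    finally show ?thesis .
  qed
  define m where "m k = nat \<lceil>y k\<rceil>" for k
  have mu0: "((\<lambda>k. real (m k) * u k) \<longlongrightarrow> 0) sequentially"
  proof (rule tendsto_sandwich[of "\<lambda>_. 0" _ _ "\<lambda>k. sqrt (4 * T k / c0)"])
    show "eventually (\<lambda>k. 0 \<le> real (m k) * u k) sequentially" using u01 by simp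
    show "eventually (\<lambda>k. real (m k) * u k \<le> sqrt (4 * T k / c0)) sequentially"
      using y1
    proof eventually_elim
      case (elim k)
      have m_le: "real (m k) \<le> 2 * y k" unfolding m_def using elim by linarith
      have m_nn: "real (m k) \<ge> 0" by simp
      have "(real (m k) * u k)\<^sup>2 = (real (m k))\<^sup>2 * (u k)\<^sup>2" by (simp add: power_mult_distrib)
      also have "\<dots> \<le> (2 * y k)\<^sup>2 * (P k / c0)"
        by (intro mult_mono power_mono m_le u2le) auto
      also have "\<dots> = 4 * ((y k)\<^sup>2 * P k) / c0" by (simp add: power_mult_distrib)
      also have "\<dots> \<le> 4 * T k / c0"
        using yPT[of k] elim c0 by (intro divide_right_mono) auto
      finally have "(real (m k) * u k)\<^sup>2 \<le> 4 * T k / c0" .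
      then have "sqrt ((real (m k) * u k)\<^sup>2) \<le> sqrt (4 * T k / c0)" by (rule real_sqrt_le_mono)
      then show ?case using u01[of k] by simp
    qed
    show "((\<lambda>_. 0) \<longlongrightarrow> 0) sequentially" by simp
    have "((\<lambda>k. sqrt (4 * T k / c0)) \<longlongrightarrow> sqrt (4 * 0 / c0)) sequentially"
      by (intro tendsto_intros T0) (use c0 in simp)
    then show "((\<lambda>k. sqrt (4 * T k / c0)) \<longlongrightarrow> 0) sequentially" by simp
  qed
  have m_top: "filterlim m sequentially sequentially"
    unfolding filterlim_at_top
  proof
    fix Z :: nat
    have "eventually (\<lambda>k. y k \<ge> real Z) sequentially"
      using y_top by (simp add: filterlim_at_top)
    then show "eventually (\<lambda>k. Z \<le> m k) sequentially"
      by eventually_elim (simp add: m_def le_nat_iff ceiling_le_iff[symmetric], linarith)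
  qed
  have P_pos: "P k \<ge> tail_fun p (real (m k))" "P k > 0" for k
  proof -
    show "P k \<ge> tail_fun p (real (m k))" unfolding P_def m_def by (rule prob_ge_ceil)
    then show "P k > 0" using rv.pos[of "m k"] by simp
  qed
  have EP: "((\<lambda>k. E k / P k) \<longlongrightarrow> 1) sequentially"
  proof (rule order_tendstoI)
    fix b :: real assume b: "b > 1"
    show "eventually (\<lambda>k. E k / P k < b) sequentially"
    proof (intro always_eventually allI)
      fix k
      have "E k / P k \<le> 1" using EP_le[of k] P_pos[of k] by simp
      then show "E k / P k < b" using b by simp
    qed
  next
    fix b :: real assume b: "b < 1"
    define \<epsilon> where "\<epsilon> = 1 - b"
    have \<epsilon>: "\<epsilon> > 0" using b by (simp add: \<epsilon>_def)
    define K where "K = nat \<lceil>4 / \<epsilon>\<rceil> + 1"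
    have K1: "K \<ge> 1" by (simp add: K_def)
    have "real K > 4 / \<epsilon>" unfolding K_def by linarith
    then have Keps: "1 / real K < \<epsilon> / 4" using \<epsilon> K1 by (simp add: field_simps)
    have "real K powr (-\<alpha>) \<le> real K powr (-1)"
      using K1 alpha by (intro powr_mono) auto
    also have "\<dots> = 1 / real K" using K1 by (simp add: powr_minus_divide)
    finally have Kpow: "real K powr (-\<alpha>) < \<epsilon> / 2" using Keps \<epsilon> by simp
    have limK: "((\<lambda>k. tail_fun p (real (K * m k)) / tail_fun p (real (1 * m k)))
                  \<longlongrightarrow> (real K / real (1::nat)) powr (-\<alpha>)) sequentially"
      by (rule filterlim_compose[OF rv.lim[OF K1 order.refl] m_top])
    have ev1: "eventually (\<lambda>k. tail_fun p (real (K * m k)) / tail_fun p (real (m k)) < \<epsilon> / 2) sequentially"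
      using order_tendstoD(2)[OF limK, of "\<epsilon> / 2"] Kpow by simp
    have ev2: "eventually (\<lambda>k. real (m k) * u k < \<epsilon> / (4 * real K)) sequentially"
      using order_tendstoD(2)[OF mu0, of "\<epsilon> / (4 * real K)"] \<epsilon> K1 by simp
    show "eventually (\<lambda>k. b < E k / P k) sequentially"
      using ev1 ev2
    proof eventually_elim
      case (elim k)
      have Pk: "P k > 0" by (rule P_pos)
      have cut: "P k - E k \<le> real (K * m k) * u k * P k + tail_fun p (real (K * m k))"
        unfolding P_def E_def u_def by (rule tailcut[OF q01])
      have "1 - E k / P k = (P k - E k) / P k" using Pk by (simp add: field_simps)
      also have "\<dots> \<le> (real (K * m k) * u k * P k + tail_fun p (real (K * m k))) / P k"
        using cut Pk by (intro divide_right_mono) auto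
      also have "\<dots> = real K * (real (m k) * u k) + tail_fun p (real (K * m k)) / P k"
        using Pk by (simp add: field_simps)
      finally have A1: "1 - E k / P k \<le> real K * (real (m k) * u k) + tail_fun p (real (K * m k)) / P k" .
      have A2: "tail_fun p (real (K * m k)) / P k \<le> tail_fun p (real (K * m k)) / tail_fun p (real (m k))"
        using P_pos[of k] rv.pos[of "m k"] rv.pos[of "K * m k"]
        by (intro divide_left_mono) auto
      have "real K * (real (m k) * u k) \<le> real K * (\<epsilon> / (4 * real K))"
        using elim(2) K1 by (intro mult_left_mono) auto
      also have "real K * (\<epsilon> / (4 * real K)) = \<epsilon> / 4" using K1 by simp
      finally have A3: "real K * (real (m k) * u k) \<le> \<epsilon> / 4" .
      have "1 - E k / P k < \<epsilon>" using A1 A2 A3 elim(1) \<epsilon> by linarith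
      then show ?case unfolding \<epsilon>_def by simp
    qed
  qed
  define c where "c = x powr (-\<alpha>)"
  have ku2: "((\<lambda>k. (real k * u k)\<^sup>2) \<longlongrightarrow> c * 1 / (\<sigma>\<^sup>2 / 2)) sequentially"
  proof -
    have L: "((\<lambda>k. (real k)\<^sup>2 * P k * (E k / P k) / gq p (u k)) \<longlongrightarrow> c * 1 / (\<sigma>\<^sup>2 / 2)) sequentially"
      unfolding c_def by (intro tendsto_intros KP EP gqlim) (use sigma(1) in simp)
    have "(real k)\<^sup>2 * P k * (E k / P k) / gq p (u k) = (real k * u k)\<^sup>2" for k
    proof -
      have g: "gq p (u k) > 0" using gq_ge[of k] c0 by simp
      have "(real k)\<^sup>2 * P k * (E k / P k) / gq p (u k) = (real k)\<^sup>2 * (E k / gq p (u k))"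
        using P_pos[of k] by simp
      also have "E k / gq p (u k) = (u k)\<^sup>2" using equ[of k] g by (simp add: field_simps)
      finally show ?thesis by (simp add: power_mult_distrib)
    qed
    with L show ?thesis by simp
  qed
  define L where "L = sqrt (c * 1 / (\<sigma>\<^sup>2 / 2))"
  have ku: "((\<lambda>k. real k * u k) \<longlongrightarrow> L) sequentially"
  proof -
    have "((\<lambda>k. sqrt ((real k * u k)\<^sup>2)) \<longlongrightarrow> L) sequentially"
      unfolding L_def by (rule tendsto_real_sqrt[OF ku2])
    moreover have "sqrt ((real k * u k)\<^sup>2) = real k * u k" for k using u01[of k] by simp
    ultimately show ?thesis by simp
  qed
  have fin: "((\<lambda>k. (1 - u k) ^ k) \<longlongrightarrow> exp (- L)) sequentially"
    by (rule exp_limit_gen[OF u0 u01(1) ku])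
  have Lval: "L = sqrt 2 / \<sigma> * x powr (- \<alpha> / 2)"
  proof -
    have "c * 1 / (\<sigma>\<^sup>2 / 2) = 2 * c / \<sigma>\<^sup>2" by simp
    then have "L = sqrt 2 * sqrt c / \<sigma>"
      unfolding L_def using sigma(1) by (simp add: real_sqrt_mult real_sqrt_divide)
    moreover have "sqrt c = x powr (- \<alpha> / 2)"
      unfolding c_def using powr_half_sqrt_powr[of x "-\<alpha>"] x by simp
    ultimately show ?thesis by simp
  qed
  have ev: "eventually (\<lambda>k. (1 - u k) ^ k = GW_max_lt_prob p k (x * \<phi> (1 / (real k)\<^sup>2))) sequentially"
    using eventually_ge_at_top[of "1::nat"] by eventually_elim (simp add: GWq)
  show ?thesis
    using tendsto_cong[THEN iffD1, OF ev fin] Lval by simp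
qed

end
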